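(* Let $X=(X_1,\dots,X_p)$ and $Y$ be Euclidean-valued random variables and $\mathcal{E}$ an environmental random variable. Let $S\subseteq\{1,\dots,p\}$ with complement $N$, write $X_A=\{X_i:i\in A\}$, and suppose $p(y\mid x_S,\epsilon)=p(y\mid x_S)$ for all $\epsilon\in\mathrm{supp}(\mathcal{E})$. Consider the assumption: for every environment $\epsilon$ there exists an environment $\epsilon'$ with $p(x,y\mid\epsilon')=p(y,x_S\mid\epsilon)\,p(x_N\mid\epsilon)$. This assumption is strictly stronger than the controllability condition for the feature $\Phi=X_S$: it implies that $X_S$ satisfies the controllability condition, while the controllability condition does not imply it.
   Context: For $\Phi=X_S$, $\mathcal{E}_\phi$ is a minimal (w.r.t. generated $\sigma$-algebras) random variable in $\sigma(\mathcal{E})$ with $\Phi$ conditionally independent of $\mathcal{E}$ given $\mathcal{E}_\phi$; it is assumed there is $\mathcal{E}_\psi$ independent of $\mathcal{E}_\phi$ with $\sigma(\mathcal{E})=\sigma(\mathcal{E}_\phi,\mathcal{E}_\psi)$, and environments are written $\epsilon=(\epsilon_\phi,\epsilon_\psi)$. Controllability condition: $\Phi$ satisfies it if for every $\epsilon=(\epsilon_\phi,\epsilon_\psi)\in\mathrm{supp}(\mathcal{E})$ there exists $\tilde\epsilon_\psi\in\mathrm{supp}(\mathcal{E}_\psi)$ such that $Y$ and $X$ are conditionally independent given $(\Phi,\epsilon_\phi,\tilde\epsilon_\psi)$. *)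

theory Defs
  imports "HOL-Probability.Probability"
begin

text \<open>
  X = (X_i)_{i in I} takes values in real^'n (index type 'n finite, standing for {1..p}),
  Y takes values in a Euclidean space 'y.
  An environment is a pair e = (e_phi, e_psi) in 'a * 'b.  Since E_phi and E_psi are
  independent and generate sigma(E), supp(E) = supp(E_phi) x supp(E_psi) =: Sphi x Spsi.
  P e is the joint law of (X, Y) given E = e, a probability measure on real^'n * 'y.
\<close>

text \<open>The sub-vector X_A, represented in real^'n with the coordinates outside A set to 0.\<close>
definition restr :: "'n set \<Rightarrow> real^'n \<Rightarrow> real^'n" where
  "restr A x = (\<chi> i. if i \<in> A then x $ i else 0)"

definition gen_alg :: "('w) measure \<Rightarrow> ('w \<Rightarrow> 'v::topological_space) \<Rightarrow> 'w measure" where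
  "gen_alg Q f = vimage_algebra (space Q) f borel"

definition cond_indep_Y_X_given_XS ::
  "'n::finite set \<Rightarrow> ((real^'n) \<times> 'y::euclidean_space) measure \<Rightarrow> bool" where
  "cond_indep_Y_X_given_XS S Q \<longleftrightarrow>
     (\<forall>B \<in> sets (borel :: 'y measure).
        AE z in Q. real_cond_exp Q (gen_alg Q fst) (\<lambda>z. indicator B (snd z)) z
                 = real_cond_exp Q (gen_alg Q (\<lambda>z. restr S (fst z))) (\<lambda>z. indicator B (snd z)) z)"

definition phi_law ::
  "'n::finite set \<Rightarrow> ('e \<Rightarrow> ((real^'n) \<times> 'y::euclidean_space) measure) \<Rightarrow> 'e \<Rightarrow> (real^'n) measure" where
  "phi_law S P e = distr (P e) borel (\<lambda>z. restr S (fst z))"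

text \<open>Standing setting:
  (i) each P e is a probability law on the Borel sets;
  (ii) invariance p(y | x_S, e) = p(y | x_S): there is a common version g_B(X_S) of
       P(Y in B | X_S, E = e) for all environments e;
  (iii) E_phi (first component) renders Phi independent of E: the law of Phi depends on e
       only through e_phi;
  (iv) minimality of E_phi: for every function h of the environment such that the law of
       Phi depends on e only through h(e), e_phi is a function of h(e)
       (i.e. sigma(E_phi) is contained in sigma(h(E)));
  (v) supports nonempty.\<close>
definition setting ::
  "'a set \<Rightarrow> 'b set \<Rightarrow> ('a \<times> 'b \<Rightarrow> ((real^'n::finite) \<times> 'y::euclidean_space) measure) \<Rightarrow> 'n set \<Rightarrow> bool" where
  "setting Sphi Spsi P S \<longleftrightarrow>
     Sphi \<noteq> {} \<and> Spsi \<noteq> {} \<and>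
     (\<forall>e \<in> Sphi \<times> Spsi. prob_space (P e) \<and> sets (P e) = sets borel) \<and>
     (\<exists>g :: 'y set \<Rightarrow> real^'n \<Rightarrow> real.
        \<forall>B \<in> sets (borel :: 'y measure). g B \<in> borel_measurable borel \<and>
          (\<forall>e \<in> Sphi \<times> Spsi.
             AE z in P e. real_cond_exp (P e) (gen_alg (P e) (\<lambda>z. restr S (fst z)))
                              (\<lambda>z. indicator B (snd z)) z = g B (restr S (fst z)))) \<and>
     (\<forall>e \<in> Sphi \<times> Spsi. \<forall>e' \<in> Sphi \<times> Spsi. fst e = fst e' \<longrightarrow> phi_law S P e = phi_law S P e') \<and>
     (\<forall>h :: 'a \<times> 'b \<Rightarrow> 'a \<times> 'b.
        (\<forall>e \<in> Sphi \<times> Spsi. \<forall>e' \<in> Sphi \<times> Spsi. h e = h e' \<longrightarrow> phi_law S P e = phi_law S P e') \<longrightarrow>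
        (\<forall>e \<in> Sphi \<times> Spsi. \<forall>e' \<in> Sphi \<times> Spsi. h e = h e' \<longrightarrow> fst e = fst e'))"

definition controllable ::
  "'a set \<Rightarrow> 'b set \<Rightarrow> ('a \<times> 'b \<Rightarrow> ((real^'n::finite) \<times> 'y::euclidean_space) measure) \<Rightarrow> 'n set \<Rightarrow> bool" where
  "controllable Sphi Spsi P S \<longleftrightarrow>
     (\<forall>e \<in> Sphi \<times> Spsi. \<exists>b \<in> Spsi. cond_indep_Y_X_given_XS S (P (fst e, b)))"

definition product_assumption ::
  "'a set \<Rightarrow> 'b set \<Rightarrow> ('a \<times> 'b \<Rightarrow> ((real^'n::finite) \<times> 'y::euclidean_space) measure) \<Rightarrow> 'n set \<Rightarrow> bool" where
  "product_assumption Sphi Spsi P S \<longleftrightarrow>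
     (\<forall>e \<in> Sphi \<times> Spsi. \<exists>e' \<in> Sphi \<times> Spsi.
        P e' = distr
                 (distr (P e) (borel :: ('y \<times> (real^'n)) measure) (\<lambda>z. (snd z, restr S (fst z)))
                  \<Otimes>\<^sub>M distr (P e) (borel :: (real^'n) measure) (\<lambda>z. restr (- S) (fst z)))
                 borel (\<lambda>((y, xs), xn). (xs + xn, y)))"

end

theory Submission
  imports Defs "HOL-Analysis.Analysis"
begin


lemma restr_cont: "continuous_on UNIV (restr A)"
  unfolding restr_def
proof (intro continuous_intros)
  fix i show "continuous_on UNIV (\<lambda>x::real^'a. if i \<in> A then x $ i else 0)"
    by (cases "i \<in> A") (auto intro!: continuous_intros)
qed

lemma restr_borel[measurable]: "restr A \<in> borel_measurable borel"
  by (rule borel_measurable_continuous_onI[OF restr_cont])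

lemma restr_SS: "restr S (restr S a + restr (- S) b) = restr S a"
  unfolding restr_def by (simp add: vec_eq_iff)

lemma restr_sum: "restr S a + restr (- S) a = a"
  unfolding restr_def by (simp add: vec_eq_iff)

lemma restr_empty: "restr {} a = 0"
  unfolding restr_def by (simp add: vec_eq_iff)

lemma restr_UNIV: "restr UNIV a = a"
  unfolding restr_def by (simp add: vec_eq_iff)

lemma gen_alg_sub:
  assumes "prob_space Q" "f \<in> borel_measurable Q"
  shows "sigma_finite_subalgebra Q (gen_alg Q f)"
proof (rule finite_measure_subalgebra_is_sigma_finite)
  have "sets (gen_alg Q f) \<subseteq> sets Q"
    using assms(2) unfolding gen_alg_def
    by (subst sets_vimage_algebra2) (auto simp: measurable_sets)
  then show "finite_measure_subalgebra Q (gen_alg Q f)"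
    using assms(1) unfolding finite_measure_subalgebra_def finite_measure_subalgebra_axioms_def subalgebra_def gen_alg_def
    by (auto simp: prob_space_def)
qed



lemma prod_rewrite:
  fixes M :: "((real^'n::finite) \<times> 'y::euclidean_space) measure"
  assumes pM: "prob_space M" and sM: "sets M = sets borel"
  shows "distr
                 (distr M (borel :: ('y \<times> (real^'n)) measure) (\<lambda>z. (snd z, restr S (fst z)))
                  \<Otimes>\<^sub>M distr M (borel :: (real^'n) measure) (\<lambda>z. restr (- S) (fst z)))
                 borel (\<lambda>((y, xs), xn). (xs + xn, y))
       = distr (M \<Otimes>\<^sub>M M) borel (\<lambda>(z1, z2). (restr S (fst z1) + restr (- S) (fst z2), snd z1))"
proof -
  have sM': "sets M = sets (borel \<Otimes>\<^sub>M borel)" using borel_prod[where ?'a="real^'n" and ?'b='y] sM by metis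
  note [measurable_cong] = sM'
  have m: "(\<lambda>z. restr (- S) (fst z)) \<in> borel_measurable M" by measurable
  have sf: "sigma_finite_measure (distr M (borel :: (real^'n) measure) (\<lambda>z. restr (- S) (fst z)))"
    using prob_space.prob_space_distr[OF pM, of "\<lambda>z. restr (- S) (fst z)" borel] m
    by (auto simp: prob_space_def finite_measure_def)
  have eq: "distr M (borel :: ('y \<times> (real^'n)) measure) (\<lambda>z. (snd z, restr S (fst z)))
                  \<Otimes>\<^sub>M distr M (borel :: (real^'n) measure) (\<lambda>z. restr (- S) (fst z))
     = distr (M \<Otimes>\<^sub>M M) (borel \<Otimes>\<^sub>M borel) (\<lambda>(x, y). ((snd x, restr S (fst x)), restr (- S) (fst y)))"
    by (rule pair_measure_distr[OF _ _ sf]) measurable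
  have c: "continuous_on UNIV (\<lambda>p::(('y \<times> (real^'n)) \<times> (real^'n)). (snd (fst p) + snd p, fst (fst p)))"
    by (intro continuous_intros)
  have mm: "(\<lambda>((y, xs), xn). (xs + xn, y)) \<in> (borel \<Otimes>\<^sub>M borel :: (('y \<times> (real^'n)) \<times> (real^'n)) measure) \<rightarrow>\<^sub>M (borel :: ((real^'n) \<times> 'y) measure)"
    unfolding borel_prod using borel_measurable_continuous_onI[OF c]
    by (simp add: case_prod_beta')
  have m2: "(\<lambda>(x, y). ((snd x, restr S (fst x)), restr (- S) (fst y))) \<in> M \<Otimes>\<^sub>M M \<rightarrow>\<^sub>M (borel \<Otimes>\<^sub>M borel :: (('y \<times> (real^'n)) \<times> (real^'n)) measure)"
    by measurable
  show ?thesis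
    unfolding eq
    apply (subst distr_distr[OF mm m2])
    apply (rule distr_cong)
    apply (auto simp: comp_def split: prod.splits)
    done
qed



lemma sets_borel_pair: "sets (borel :: ('a::second_countable_topology \<times> 'b::second_countable_topology) measure) = sets (borel \<Otimes>\<^sub>M borel)"
  by (rule arg_cong[where f=sets, OF borel_prod[symmetric]])

lemma T_meas:
  fixes M :: "((real^'n::finite) \<times> 'y::euclidean_space) measure"
  assumes sM: "sets M = sets borel"
  shows "(\<lambda>(z1, z2). (restr S (fst z1) + restr (- S) (fst z2), snd z1)) \<in> M \<Otimes>\<^sub>M M \<rightarrow>\<^sub>M (borel :: ((real^'n) \<times> 'y) measure)"
proof -
  have sM': "sets M = sets (borel \<Otimes>\<^sub>M borel)" using borel_prod[where ?'a="real^'n" and ?'b='y] sM by metis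
  note [measurable_cong] = sM'
  show ?thesis
    unfolding measurable_cong_sets[OF refl sets_borel_pair]
    by measurable
qed

lemma phi_law_prod:
  fixes M :: "((real^'n::finite) \<times> 'y::euclidean_space) measure"
  assumes pM: "prob_space M" and sM: "sets M = sets borel"
  shows "distr (distr (M \<Otimes>\<^sub>M M) borel (\<lambda>(z1, z2). (restr S (fst z1) + restr (- S) (fst z2), snd z1)))
            borel (\<lambda>z. restr S (fst z)) = distr M borel (\<lambda>z. restr S (fst z))"
proof -
  have sM': "sets M = sets (borel \<Otimes>\<^sub>M borel)" using borel_prod[where ?'a="real^'n" and ?'b='y] sM by metis
  note [measurable_cong] = sM'
  have m1: "(\<lambda>z. restr S (fst z)) \<in> (borel :: ((real^'n) \<times> 'y) measure) \<rightarrow>\<^sub>M (borel :: (real^'n) measure)"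
    unfolding measurable_cong_sets[OF sets_borel_pair refl] by measurable
  have m3: "(\<lambda>z. restr S (fst z)) \<in> M \<rightarrow>\<^sub>M (borel :: (real^'n) measure)"
    by measurable
  have "distr (distr (M \<Otimes>\<^sub>M M) borel (\<lambda>(z1, z2). (restr S (fst z1) + restr (- S) (fst z2), snd z1)))
            borel (\<lambda>z. restr S (fst z)) = distr (M \<Otimes>\<^sub>M M) borel (\<lambda>p. restr S (fst (fst p)))"
    apply (subst distr_distr[OF m1 T_meas[OF sM]])
    apply (rule distr_cong)
    apply (auto simp: restr_SS split: prod.splits)
    done
  also have "\<dots> = distr (distr (M \<Otimes>\<^sub>M M) M fst) borel (\<lambda>z. restr S (fst z))"
    by (subst distr_distr[OF m3]) (auto simp: comp_def)
  also have "\<dots> = distr M borel (\<lambda>z. restr S (fst z))"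
    by (simp add: prob_space.distr_pair_fst[OF pM])
  finally show ?thesis .
qed



lemma prod_ci:
  fixes M :: "((real^'n::finite) \<times> 'y::euclidean_space) measure" and g :: "real^'n \<Rightarrow> real"
  assumes pM: "prob_space M" and sM: "sets M = sets borel"
   and gm[measurable]: "g \<in> borel_measurable borel" and B[measurable]: "B \<in> sets (borel::'y measure)"
   and gM: "AE z in M. real_cond_exp M (gen_alg M (\<lambda>z. restr S (fst z))) (\<lambda>z. indicator B (snd z)) z = g (restr S (fst z))"
   and Q_def: "Q = distr (M \<Otimes>\<^sub>M M) borel (\<lambda>(z1, z2). (restr S (fst z1) + restr (- S) (fst z2), snd z1))"
  shows "AE z in Q. real_cond_exp Q (gen_alg Q fst) (\<lambda>z. indicator B (snd z)) z = g (restr S (fst z))"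
proof -
  have sM': "sets M = sets (borel \<Otimes>\<^sub>M borel)" using borel_prod[where ?'a="real^'n" and ?'b='y] sM by metis
  note [measurable_cong] = sM'
  note Tm[measurable] = T_meas[OF sM, of S]
  interpret pM: prob_space M by (rule pM)
  interpret pp: pair_sigma_finite M M by unfold_locales
  have pQ: "prob_space Q" unfolding Q_def
    by (rule prob_space.prob_space_distr[OF prob_space_pair[OF pM pM] Tm])
  have sQ: "sets Q = sets borel" by (simp add: Q_def)
  have spQ: "space Q = UNIV" using sets_eq_imp_space_eq[OF sQ] by simp
  have sQ': "sets Q = sets (borel \<Otimes>\<^sub>M borel)" using sQ sets_borel_pair by metis
  note [measurable_cong] = sQ'
  interpret pQ: prob_space Q by (rule pQ)
  have fstQ: "fst \<in> borel_measurable Q" by measurable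
  interpret F: sigma_finite_subalgebra Q "gen_alg Q fst" by (rule gen_alg_sub[OF pQ fstQ])
  interpret G: sigma_finite_subalgebra M "gen_alg M (\<lambda>z. restr S (fst z))"
    by (rule gen_alg_sub[OF pM]) measurable
  have indM: "integrable M (\<lambda>z. indicator B (snd z) :: real)"
    by (rule pM.integrable_const_bound[where B=1]) auto
  have intgM: "integrable M (\<lambda>z. g (restr S (fst z)))"
    by (rule integrable_cong_AE_imp[OF G.real_cond_exp_int(1)[OF indM] _ gM]) measurable
  have intgMM: "integrable (M \<Otimes>\<^sub>M M) (\<lambda>p. g (restr S (fst (fst p))))"
    using integrable_distr_eq[of fst "M \<Otimes>\<^sub>M M" M "\<lambda>z. g (restr S (fst z))"] intgM
    by (simp add: pM.distr_pair_fst)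
  have intgQ: "integrable Q (\<lambda>z. g (restr S (fst z)))"
    unfolding Q_def
    apply (subst integrable_distr_eq[OF Tm])
     apply (unfold measurable_cong_sets[OF sets_borel_pair refl], measurable)[1]
    using intgMM by (simp add: case_prod_beta restr_SS)
  show ?thesis
  proof (rule F.real_cond_exp_charact)
    show "integrable Q (\<lambda>z. indicator B (snd z) :: real)"
      by (rule pQ.integrable_const_bound[where B=1]) auto
    show "integrable Q (\<lambda>z. g (restr S (fst z)))" by (rule intgQ)
    show "(\<lambda>z. g (restr S (fst z))) \<in> borel_measurable (gen_alg Q fst)"
      unfolding gen_alg_def
      by (rule measurable_compose[OF measurable_vimage_algebra1]) auto
    fix A assume "A \<in> sets (gen_alg Q fst)"
    then obtain C where C[measurable]: "C \<in> sets borel" and AC: "A = fst -` C"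
      unfolding gen_alg_def by (subst (asm) sets_vimage_algebra2) (auto simp: spQ)
    show "(\<integral>x\<in>A. indicator B (snd x) \<partial>Q) = (\<integral>x\<in>A. g (restr S (fst x)) \<partial>Q)"
    proof -
      interpret pMM: prob_space "M \<Otimes>\<^sub>M M" by (rule prob_space_pair[OF pM pM])
      define H :: "((real^'n) \<times> 'y) \<Rightarrow> ((real^'n) \<times> 'y) \<Rightarrow> real" where "H = (\<lambda>z1 z2. indicator C (restr S (fst z1) + restr (- S) (fst z2)) * indicator B (snd z1) :: real)"
      define K :: "((real^'n) \<times> 'y) \<Rightarrow> ((real^'n) \<times> 'y) \<Rightarrow> real" where "K = (\<lambda>z1 z2. indicator C (restr S (fst z1) + restr (- S) (fst z2)) * g (restr S (fst z1)))"
      have Hm[measurable]: "(\<lambda>p. H (fst p) (snd p)) \<in> borel_measurable (M \<Otimes>\<^sub>M M)"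
        unfolding H_def by measurable
      have Km[measurable]: "(\<lambda>p. K (fst p) (snd p)) \<in> borel_measurable (M \<Otimes>\<^sub>M M)"
        unfolding K_def by measurable
      have HI: "integrable (M \<Otimes>\<^sub>M M) (case_prod H)"
        by (rule pMM.integrable_const_bound[where B=1]) (auto simp: H_def case_prod_beta indicator_def)
      have KI: "integrable (M \<Otimes>\<^sub>M M) (case_prod K)"
        by (rule Bochner_Integration.integrable_bound[OF intgMM]) (auto simp: K_def case_prod_beta indicator_def)
      have L: "(\<integral>x\<in>A. indicator B (snd x) \<partial>Q) = (\<integral>p. H (fst p) (snd p) \<partial>(M \<Otimes>\<^sub>M M))"
        unfolding set_lebesgue_integral_def AC Q_def
        apply (subst integral_distr[OF Tm])
         apply (unfold measurable_cong_sets[OF sets_borel_pair refl], measurable)[1]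
        apply (rule Bochner_Integration.integral_cong[OF refl])
         apply (auto simp: H_def indicator_def split: prod.splits)
        done
      have R: "(\<integral>x\<in>A. g (restr S (fst x)) \<partial>Q) = (\<integral>p. K (fst p) (snd p) \<partial>(M \<Otimes>\<^sub>M M))"
        unfolding set_lebesgue_integral_def AC Q_def
        apply (subst integral_distr[OF Tm])
         apply (unfold measurable_cong_sets[OF sets_borel_pair refl], measurable)[1]
        apply (rule Bochner_Integration.integral_cong[OF refl])
         apply (auto simp: K_def restr_SS indicator_def split: prod.splits)
        done
      have inner: "(\<integral>z1. H z1 z2 \<partial>M) = (\<integral>z1. K z1 z2 \<partial>M)" for z2
      proof -
        define h :: "((real^'n) \<times> 'y) \<Rightarrow> real" where "h = (\<lambda>z1. indicator C (restr S (fst z1) + restr (- S) (fst z2)) :: real)"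
        have hm: "h \<in> borel_measurable (gen_alg M (\<lambda>z. restr S (fst z)))"
        proof -
          have "(\<lambda>z1. (\<lambda>v. indicator C (v + restr (- S) (fst z2)) :: real) ((\<lambda>z. restr S (fst z)) z1))
             \<in> borel_measurable (vimage_algebra (space M) (\<lambda>z. restr S (fst z)) borel)"
            by (rule measurable_compose[OF measurable_vimage_algebra1]) auto
          then show ?thesis by (simp add: h_def gen_alg_def)
        qed
        have hI: "integrable M (\<lambda>x. h x * indicator B (snd x))"
          by (rule pM.integrable_const_bound[where B=1]) (auto simp: h_def indicator_def)
        have "(\<integral>z1. H z1 z2 \<partial>M) = (\<integral>x. h x * indicator B (snd x) \<partial>M)"
          by (simp add: H_def h_def)
        also have "\<dots> = (\<integral>x. h x * real_cond_exp M (gen_alg M (\<lambda>z. restr S (fst z))) (\<lambda>z. indicator B (snd z)) x \<partial>M)"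
          by (rule G.real_cond_exp_intg(2)[OF hI hm, symmetric]) measurable
        also have "\<dots> = (\<integral>z1. K z1 z2 \<partial>M)"
          unfolding K_def
          by (rule integral_cong_AE) (use gM in \<open>auto simp: h_def\<close>)
        finally show ?thesis .
      qed
      show ?thesis
        unfolding L R
        using pp.integral_snd[OF HI] pp.integral_snd[OF KI] inner
        by (simp add: case_prod_beta')
    qed
  qed
qed



lemma part1:
  fixes Sphi :: "'a set" and Spsi :: "'b set"
    and P :: "'a \<times> 'b \<Rightarrow> ((real^'n::finite) \<times> 'y::euclidean_space) measure" and S :: "'n set"
  assumes st: "setting Sphi Spsi P S" and pa: "product_assumption Sphi Spsi P S"
  shows "controllable Sphi Spsi P S"
proof -
  from st have ps0: "\<forall>e \<in> Sphi \<times> Spsi. prob_space (P e) \<and> sets (P e) = sets borel"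
    unfolding setting_def by (elim conjE) assumption
  then have ps: "\<And>e. e \<in> Sphi \<times> Spsi \<Longrightarrow> prob_space (P e) \<and> sets (P e) = sets borel" by blast
  from st have gex: "\<exists>g :: 'y set \<Rightarrow> real^'n \<Rightarrow> real.
        \<forall>B \<in> sets (borel :: 'y measure). g B \<in> borel_measurable borel \<and>
          (\<forall>e \<in> Sphi \<times> Spsi.
             AE z in P e. real_cond_exp (P e) (gen_alg (P e) (\<lambda>z. restr S (fst z)))
                              (\<lambda>z. indicator B (snd z)) z = g B (restr S (fst z)))"
    unfolding setting_def by (elim conjE) assumption
  from st obtain g :: "'y set \<Rightarrow> real^'n \<Rightarrow> real" where
    gB: "\<And>B. B \<in> sets (borel :: 'y measure) \<Longrightarrow> g B \<in> borel_measurable borel \<and>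
          (\<forall>e \<in> Sphi \<times> Spsi.
             AE z in P e. real_cond_exp (P e) (gen_alg (P e) (\<lambda>z. restr S (fst z)))
                              (\<lambda>z. indicator B (snd z)) z = g B (restr S (fst z)))"
    using gex by blast
  from st have mini0: "\<forall>h :: 'a \<times> 'b \<Rightarrow> 'a \<times> 'b.
        (\<forall>e \<in> Sphi \<times> Spsi. \<forall>e' \<in> Sphi \<times> Spsi. h e = h e' \<longrightarrow> phi_law S P e = phi_law S P e') \<longrightarrow>
        (\<forall>e \<in> Sphi \<times> Spsi. \<forall>e' \<in> Sphi \<times> Spsi. h e = h e' \<longrightarrow> fst e = fst e')"
      unfolding setting_def by (elim conjE) assumption
  show ?thesis unfolding controllable_def
  proof
    fix e assume e: "e \<in> Sphi \<times> Spsi"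
    from pa e obtain e' where e': "e' \<in> Sphi \<times> Spsi" and Pe': "P e' = distr
                 (distr (P e) (borel :: ('y \<times> (real^'n)) measure) (\<lambda>z. (snd z, restr S (fst z)))
                  \<Otimes>\<^sub>M distr (P e) (borel :: (real^'n) measure) (\<lambda>z. restr (- S) (fst z)))
                 borel (\<lambda>((y, xs), xn). (xs + xn, y))"
      unfolding product_assumption_def by blast
    have pe: "prob_space (P e)" "sets (P e) = sets borel" using ps[OF e] by auto
    have Pe'2: "P e' = distr (P e \<Otimes>\<^sub>M P e) borel (\<lambda>(z1, z2). (restr S (fst z1) + restr (- S) (fst z2), snd z1))"
      unfolding Pe' by (rule prod_rewrite[OF pe])
    have phieq: "phi_law S P e' = phi_law S P e"
      unfolding phi_law_def Pe'2 by (rule phi_law_prod[OF pe])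
    define h where "h = (\<lambda>x. if x = e' then e else x)"
    have "\<forall>e1 \<in> Sphi \<times> Spsi. \<forall>e2 \<in> Sphi \<times> Spsi. h e1 = h e2 \<longrightarrow> phi_law S P e1 = phi_law S P e2"
      unfolding h_def using phieq by auto
    then have "\<forall>e1 \<in> Sphi \<times> Spsi. \<forall>e2 \<in> Sphi \<times> Spsi. h e1 = h e2 \<longrightarrow> fst e1 = fst e2"
      using mini0 by blast
    then have "h e' = h e \<longrightarrow> fst e' = fst e" using e e' by blast
    then have fe: "fst e' = fst e" unfolding h_def by simp
    have ee: "(fst e, snd e') = e'" using fe by (metis prod.collapse)
    show "\<exists>b\<in>Spsi. cond_indep_Y_X_given_XS S (P (fst e, b))"
    proof (intro bexI[of _ "snd e'"])
      show "snd e' \<in> Spsi" using e' by auto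
      show "cond_indep_Y_X_given_XS S (P (fst e, snd e'))"
        unfolding ee cond_indep_Y_X_given_XS_def
      proof
        fix B :: "'y set" assume B: "B \<in> sets borel"
        have a1: "AE z in P e'. real_cond_exp (P e') (gen_alg (P e') fst) (\<lambda>z. indicator B (snd z)) z = g B (restr S (fst z))"
          by (rule prod_ci[OF pe _ B _ Pe'2]) (use gB[OF B] e in auto)
        have a2: "AE z in P e'. real_cond_exp (P e') (gen_alg (P e') (\<lambda>z. restr S (fst z))) (\<lambda>z. indicator B (snd z)) z = g B (restr S (fst z))"
          using gB[OF B] e' by auto
        show "AE z in P e'. real_cond_exp (P e') (gen_alg (P e') fst) (\<lambda>z. indicator B (snd z)) z
                 = real_cond_exp (P e') (gen_alg (P e') (\<lambda>z. restr S (fst z))) (\<lambda>z. indicator B (snd z)) z"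
          using a1 a2 by eventually_elim simp
      qed
    qed
  qed
qed



lemma const_ce:
  fixes Q :: "'w measure" and c :: "'v::topological_space" and f :: "'w \<Rightarrow> real"
  assumes pQ: "prob_space Q" and fI: "integrable Q f"
  shows "AE z in Q. real_cond_exp Q (gen_alg Q (\<lambda>z. c)) f z = (\<integral>x. f x \<partial>Q)"
proof -
  interpret pQ: prob_space Q by (rule pQ)
  interpret F: sigma_finite_subalgebra Q "gen_alg Q (\<lambda>z. c)" by (rule gen_alg_sub[OF pQ]) simp
  show ?thesis
  proof (rule F.real_cond_exp_charact)
    fix A assume "A \<in> sets (gen_alg Q (\<lambda>z. c))"
    then obtain C where "A = (\<lambda>z. c) -` C \<inter> space Q"
      unfolding gen_alg_def by (subst (asm) sets_vimage_algebra2) auto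
    then have "A = {} \<or> A = space Q" by (cases "c \<in> C") auto
    then show "(\<integral>x\<in>A. f x \<partial>Q) = (\<integral>x\<in>A. (\<integral>x. f x \<partial>Q) \<partial>Q)"
    proof
      assume "A = {}" then show ?thesis by (simp add: set_lebesgue_integral_def)
    next
      assume A: "A = space Q"
      have "(\<integral>x\<in>A. f x \<partial>Q) = (\<integral>x. f x \<partial>Q)"
        unfolding set_lebesgue_integral_def A
        by (rule Bochner_Integration.integral_cong) auto
      moreover have "(\<integral>x\<in>A. (\<integral>x. f x \<partial>Q) \<partial>Q) = (\<integral>x. f x \<partial>Q)"
        unfolding set_lebesgue_integral_def A
        by (subst Bochner_Integration.integral_cong[OF refl, of _ _ "\<lambda>_. (\<integral>x. f x \<partial>Q)"]) (auto simp: pQ.prob_space)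
      ultimately show ?thesis by simp
    qed
  qed (auto intro: fI)
qed

definition bern :: "bool measure" where "bern = measure_pmf (bernoulli_pmf (1/2))"

definition Pgen :: "(bool \<Rightarrow> real^2) \<Rightarrow> ((real^2) \<times> real) measure" where
  "Pgen xf = distr bern borel (\<lambda>b. (xf b, of_bool b))"

lemma Pgen_prob: "prob_space (Pgen xf)"
  unfolding Pgen_def bern_def
  by (rule prob_space.prob_space_distr[OF prob_space_measure_pmf]) simp

lemma Pgen_sets: "sets (Pgen xf) = sets borel"
  unfolding Pgen_def by simp

lemma indsnd_meas:
  assumes B: "B \<in> sets (borel :: real measure)"
  shows "(\<lambda>z. indicator B (snd z) :: real) \<in> borel_measurable (borel :: ((real^2) \<times> real) measure)"
  unfolding measurable_cong_sets[OF sets_borel_pair refl] using B by measurable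

lemma Pgen_intY:
  assumes B: "B \<in> sets (borel :: real measure)"
  shows "(\<integral>z. indicator B (snd z) \<partial>Pgen xf) = (\<integral>b. indicator B (of_bool b) \<partial>bern :: real)"
  unfolding Pgen_def
  by (subst integral_distr[OF _ indsnd_meas[OF B]]) (simp_all add: bern_def)

lemma rfst_meas: "(\<lambda>z. restr {} (fst z)) \<in> (borel :: ((real^2) \<times> real) measure) \<rightarrow>\<^sub>M (borel :: (real^2) measure)"
  unfolding measurable_cong_sets[OF sets_borel_pair refl] by measurable

lemma Pgen_phi: "distr (Pgen xf) borel (\<lambda>z. restr {} (fst z)) = distr bern (borel :: (real^2) measure) (\<lambda>b. 0)"
  unfolding Pgen_def
  by (subst distr_distr[OF rfst_meas]) (simp_all add: bern_def comp_def restr_empty)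

lemma Pgen_ce_empty:
  assumes B: "B \<in> sets (borel :: real measure)"
  shows "AE z in Pgen xf. real_cond_exp (Pgen xf) (gen_alg (Pgen xf) (\<lambda>z. restr {} (fst z))) (\<lambda>z. indicator B (snd z)) z
            = (\<integral>b. indicator B (of_bool b) \<partial>bern :: real)"
proof -
  interpret pP: prob_space "Pgen xf" by (rule Pgen_prob)
  have I: "integrable (Pgen xf) (\<lambda>z. indicator B (snd z) :: real)"
    by (rule pP.integrable_const_bound[where B=1])
       (auto simp: measurable_cong_sets[OF Pgen_sets refl] indsnd_meas[OF B])
  show ?thesis
    using const_ce[OF Pgen_prob I, of "0 :: real^2"] by (simp add: restr_empty Pgen_intY[OF B])
qed



lemma P0_ci: "cond_indep_Y_X_given_XS {} (Pgen (\<lambda>_. 0))"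
  unfolding cond_indep_Y_X_given_XS_def
proof
  fix B :: "real set" assume B[measurable]: "B \<in> sets borel"
  define Q where "Q = Pgen (\<lambda>_. 0)"
  define c where "c = (\<integral>b. indicator B (of_bool b) \<partial>bern :: real)"
  interpret pQ: prob_space Q unfolding Q_def by (rule Pgen_prob)
  interpret pb: prob_space bern unfolding bern_def by (rule prob_space_measure_pmf)
  have sQ: "sets Q = sets borel" unfolding Q_def by (rule Pgen_sets)
  have spQ: "space Q = UNIV" using sets_eq_imp_space_eq[OF sQ] by simp
  have fstQ: "fst \<in> borel_measurable Q"
    unfolding measurable_cong_sets[OF sQ refl] measurable_cong_sets[OF sets_borel_pair refl] by measurable
  interpret F: sigma_finite_subalgebra Q "gen_alg Q fst" by (rule gen_alg_sub[OF pQ.prob_space_axioms fstQ])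
  have I: "integrable Q (\<lambda>z. indicator B (snd z) :: real)"
    by (rule pQ.integrable_const_bound[where B=1])
       (auto simp: measurable_cong_sets[OF sQ refl] indsnd_meas[OF B])
  have a1: "AE z in Q. real_cond_exp Q (gen_alg Q fst) (\<lambda>z. indicator B (snd z)) z = c"
  proof (rule F.real_cond_exp_charact)
    fix A assume "A \<in> sets (gen_alg Q fst)"
    then obtain C where C[measurable]: "C \<in> sets borel" and AC: "A = fst -` C"
      unfolding gen_alg_def by (subst (asm) sets_vimage_algebra2) (auto simp: spQ)
    have m1: "(\<lambda>z. indicator A z *\<^sub>R indicator B (snd z) :: real) \<in> borel_measurable (borel :: ((real^2) \<times> real) measure)"
      unfolding AC measurable_cong_sets[OF sets_borel_pair refl] by measurable
    have m2: "(\<lambda>z. indicator A z *\<^sub>R c :: real) \<in> borel_measurable (borel :: ((real^2) \<times> real) measure)"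
      unfolding AC measurable_cong_sets[OF sets_borel_pair refl] by measurable
    have "(\<integral>x\<in>A. indicator B (snd x) \<partial>Q) = (\<integral>b. indicator C 0 * indicator B (of_bool b) \<partial>bern :: real)"
      unfolding set_lebesgue_integral_def Q_def Pgen_def
      apply (subst integral_distr[OF _ m1])
       apply (simp add: bern_def)
      apply (rule Bochner_Integration.integral_cong[OF refl])
      apply (simp add: AC indicator_def)
      done
    also have "\<dots> = indicator C 0 * c" unfolding c_def by simp
    also have "\<dots> = (\<integral>b. indicator C 0 * c \<partial>bern)" by (simp add: pb.prob_space)
    also have "\<dots> = (\<integral>x\<in>A. c \<partial>Q :: real)"
      unfolding set_lebesgue_integral_def Q_def Pgen_def
      apply (subst integral_distr[OF _ m2])
       apply (simp add: bern_def)
      apply (rule Bochner_Integration.integral_cong[OF refl])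
      apply (simp add: AC indicator_def)
      done
    finally show "(\<integral>x\<in>A. indicator B (snd x) \<partial>Q) = (\<integral>x\<in>A. c \<partial>Q)" .
  qed (auto intro: I)
  have a2: "AE z in Q. real_cond_exp Q (gen_alg Q (\<lambda>z. restr {} (fst z))) (\<lambda>z. indicator B (snd z)) z = c"
    unfolding Q_def c_def by (rule Pgen_ce_empty[OF B])
  show "AE z in Pgen (\<lambda>_. 0). real_cond_exp (Pgen (\<lambda>_. 0)) (gen_alg (Pgen (\<lambda>_. 0)) fst) (\<lambda>z. indicator B (snd z)) z =
         real_cond_exp (Pgen (\<lambda>_. 0)) (gen_alg (Pgen (\<lambda>_. 0)) (\<lambda>z. restr {} (fst z))) (\<lambda>z. indicator B (snd z)) z"
    using a1 a2 unfolding Q_def by eventually_elim simp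
qed



definition Pex :: "nat \<times> nat \<Rightarrow> ((real^2) \<times> real) measure" where
  "Pex e = (if snd e = 0 then Pgen (\<lambda>_. 0) else Pgen (\<lambda>b. \<chi> i. of_bool b))"

lemma ex_setting: "setting {0} {0, 1} Pex {}"
  unfolding setting_def
proof (intro conjI)
  show "\<forall>e\<in>{0::nat} \<times> {0::nat, 1}. prob_space (Pex e) \<and> sets (Pex e) = sets borel"
    by (auto simp: Pex_def Pgen_prob Pgen_sets)
  show "\<exists>g :: real set \<Rightarrow> real^2 \<Rightarrow> real. \<forall>B\<in>sets borel. g B \<in> borel_measurable borel \<and>
       (\<forall>e\<in>{0::nat} \<times> {0::nat, 1}. AE z in Pex e. real_cond_exp (Pex e) (gen_alg (Pex e) (\<lambda>z. restr {} (fst z)))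
                       (\<lambda>z. indicator B (snd z)) z = g B (restr {} (fst z)))"
  proof (rule exI[of _ "\<lambda>B x. (\<integral>b. indicator B (of_bool b) \<partial>bern :: real)"], intro ballI conjI)
    fix B :: "real set" and e :: "nat \<times> nat" assume B: "B \<in> sets borel"
    show "(\<lambda>x. (\<integral>b. indicator B (of_bool b) \<partial>bern :: real)) \<in> borel_measurable borel" by simp
    show "AE z in Pex e. real_cond_exp (Pex e) (gen_alg (Pex e) (\<lambda>z. restr {} (fst z)))
                       (\<lambda>z. indicator B (snd z)) z = (\<integral>b. indicator B (of_bool b) \<partial>bern :: real)"
      unfolding Pex_def by (simp split: if_split add: Pgen_ce_empty[OF B])
  qed
  show "\<forall>e\<in>{0::nat} \<times> {0::nat, 1}. \<forall>e'\<in>{0} \<times> {0, 1}. fst e = fst e' \<longrightarrow> phi_law {} Pex e = phi_law {} Pex e'"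
    by (auto simp: phi_law_def Pex_def Pgen_phi)
  show "\<forall>h. (\<forall>e\<in>{0::nat} \<times> {0::nat, 1}. \<forall>e'\<in>{0} \<times> {0, 1}. h e = h e' \<longrightarrow> phi_law {} Pex e = phi_law {} Pex e') \<longrightarrow>
        (\<forall>e\<in>{0::nat} \<times> {0::nat, 1}. \<forall>e'\<in>{0} \<times> {0, 1}. h e = h e' \<longrightarrow> fst e = fst e')"
    by auto
qed auto

lemma ex_controllable: "controllable {0} {0, 1} Pex {}"
  unfolding controllable_def
  by (auto intro!: bexI[of _ 0] simp: Pex_def P0_ci)

definition Tst :: "((real^2) \<times> real) set" where "Tst = {x::real^2. x $ 1 = 1} \<times> {0}"

lemma Tst_sets: "Tst \<in> sets borel"
proof -
  have c: "closed {x::real^2. x $ 1 = 1}"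
    by (intro closed_Collect_eq continuous_intros)
  have "Tst \<in> sets (borel \<Otimes>\<^sub>M borel)"
    unfolding Tst_def by (rule pair_measureI) (auto intro: borel_closed[OF c])
  then show ?thesis using sets_borel_pair by metis
qed

lemma Pgen_emeasure: "emeasure (Pgen xf) A = emeasure bern {b. (xf b, of_bool b) \<in> A}" if "A \<in> sets borel"
  unfolding Pgen_def using that
  by (subst emeasure_distr) (auto simp: bern_def vimage_def)

lemma ex_not_product: "\<not> product_assumption {0} {0, 1} Pex {}"
proof
  assume "product_assumption {0} {0, 1} Pex {}"
  then obtain e' where e': "e' \<in> {0::nat} \<times> {0::nat, 1}" and
    Pe': "Pex e' = distr
                 (distr (Pex (0, 1)) (borel :: (real \<times> (real^2)) measure) (\<lambda>z. (snd z, restr {} (fst z)))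
                  \<Otimes>\<^sub>M distr (Pex (0, 1)) (borel :: (real^2) measure) (\<lambda>z. restr (- {}) (fst z)))
                 borel (\<lambda>((y, xs), xn). (xs + xn, y))"
    unfolding product_assumption_def by blast
  define P1 where "P1 = Pgen (\<lambda>b. \<chi> i. of_bool b)"
  have P01: "Pex (0, 1) = P1" by (simp add: Pex_def P1_def)
  have Pe'2: "Pex e' = distr (P1 \<Otimes>\<^sub>M P1) borel (\<lambda>(z1, z2). (restr {} (fst z1) + restr (- {}) (fst z2), snd z1))"
    unfolding Pe' P01 P1_def by (rule prod_rewrite[OF Pgen_prob Pgen_sets])
  interpret p1: prob_space P1 unfolding P1_def by (rule Pgen_prob)
  have sP1: "sets P1 = sets borel" unfolding P1_def by (rule Pgen_sets)
  have spP1: "space P1 = UNIV" using sets_eq_imp_space_eq[OF sP1] by simp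
  have A1: "{z::(real^2) \<times> real. snd z = 0} \<in> sets borel"
  proof -
    have "{z::(real^2) \<times> real. snd z = 0} = UNIV \<times> {0}" by auto
    moreover have "UNIV \<times> {0::real} \<in> sets (borel \<Otimes>\<^sub>M (borel :: real measure) :: ((real^2) \<times> real) measure)"
      by (rule pair_measureI) auto
    ultimately show ?thesis using sets_borel_pair by metis
  qed
  have A2: "{z::(real^2) \<times> real. fst z $ 1 = 1} \<in> sets borel"
  proof -
    have c: "closed {x::real^2. x $ 1 = 1}"
      by (intro closed_Collect_eq continuous_intros)
    have "{z::(real^2) \<times> real. fst z $ 1 = 1} = {x::real^2. x $ 1 = 1} \<times> UNIV" by auto
    moreover have "{x::real^2. x $ 1 = 1} \<times> UNIV \<in> sets (borel \<Otimes>\<^sub>M (borel :: real measure) :: ((real^2) \<times> real) measure)"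
      by (rule pair_measureI) (auto intro: borel_closed[OF c])
    ultimately show ?thesis using sets_borel_pair by metis
  qed
  have "emeasure (Pex e') Tst = emeasure (P1 \<Otimes>\<^sub>M P1) ({z. snd z = 0} \<times> {z. fst z $ 1 = 1})"
    unfolding Pe'2
    apply (subst emeasure_distr[OF T_meas[OF sP1] Tst_sets])
    apply (rule arg_cong[where f="emeasure (P1 \<Otimes>\<^sub>M P1)"])
    apply (auto simp: Tst_def space_pair_measure spP1 restr_empty restr_UNIV)
    done
  also have "\<dots> = emeasure P1 {z. snd z = 0} * emeasure P1 {z. fst z $ 1 = 1}"
    by (rule p1.emeasure_pair_measure_Times) (auto simp: sP1 A1 A2)
  also have "emeasure P1 {z. snd z = 0} = emeasure bern {False}"
    unfolding P1_def by (subst Pgen_emeasure[OF A1]) (auto intro!: arg_cong[where f="emeasure bern"])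
  also have "emeasure P1 {z. fst z $ 1 = 1} = emeasure bern {True}"
    unfolding P1_def by (subst Pgen_emeasure[OF A2]) (auto intro!: arg_cong[where f="emeasure bern"])
  finally have E1: "emeasure (Pex e') Tst = ennreal (1/2) * ennreal (1/2)"
    by (simp add: bern_def emeasure_pmf_single)
  have Z0: "emeasure (Pgen (\<lambda>_. 0)) Tst = 0"
    by (subst Pgen_emeasure[OF Tst_sets]) (simp add: Tst_def)
  have Z1: "emeasure (Pgen (\<lambda>b. \<chi> i. of_bool b)) Tst = 0"
    by (subst Pgen_emeasure[OF Tst_sets]) (simp add: Tst_def)
  have E0: "emeasure (Pex e') Tst = 0"
    using e' Z0 Z1 by (auto simp: Pex_def)
  from E0 E1 show False
    by (simp add: ennreal_mult'')
qed


theorem theorem5: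
  shows "(\<forall>(Sphi :: 'a set) (Spsi :: 'b set)
            (P :: 'a \<times> 'b \<Rightarrow> ((real^'n::finite) \<times> 'y::euclidean_space) measure) (S :: 'n set).
            setting Sphi Spsi P S \<longrightarrow> product_assumption Sphi Spsi P S \<longrightarrow> controllable Sphi Spsi P S)
       \<and> (\<exists>(Sphi :: nat set) (Spsi :: nat set) (P :: nat \<times> nat \<Rightarrow> ((real^2) \<times> real) measure) (S :: 2 set).
            setting Sphi Spsi P S \<and> controllable Sphi Spsi P S \<and> \<not> product_assumption Sphi Spsi P S)"
proof
  show "\<forall>(Sphi :: 'a set) (Spsi :: 'b set)
            (P :: 'a \<times> 'b \<Rightarrow> ((real^'n::finite) \<times> 'y::euclidean_space) measure) (S :: 'n set).
            setting Sphi Spsi P S \<longrightarrow> product_assumption Sphi Spsi P S \<longrightarrow> controllable Sphi Spsi P S"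
    by (intro allI impI) (rule part1)
  show "\<exists>(Sphi :: nat set) (Spsi :: nat set) (P :: nat \<times> nat \<Rightarrow> ((real^2) \<times> real) measure) (S :: 2 set).
            setting Sphi Spsi P S \<and> controllable Sphi Spsi P S \<and> \<not> product_assumption Sphi Spsi P S"
    using ex_setting ex_controllable ex_not_product by blast
qed

end
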